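(* Every Mayet-Godowski equation holds in every ortholattice that admits a strong set of states.
   Context: An ortholattice is a bounded lattice with an operation $'$ satisfying $a''=a$, $a\le b\Rightarrow b'\le a'$, $a\cap a'=0$ and $a\cup a'=1$. We write $a\perp b$ for $a\le b'$. A state on an ortholattice $L$ is a map $m:L\to[0,1]$ with $m(1)=1$ and $a\perp b\Rightarrow m(a\cup b)=m(a)+m(b)$. $L$ admits a strong set of states if there is a nonempty set $S$ of states such that for all $a,b\in L$ with $a\not\le b$ some $m\in S$ has $m(a)=1$ and $m(b)\ne1$. A Mayet-Godowski equation (MGE) is a conditional equality $$t_1\cap\cdots\cap t_n=u_1\cap\cdots\cap u_n,\qquad n\ge2,$$ where each $t_i=a_{i,1}\cup\cdots\cup a_{i,p_i}$ and each $u_i=b_{i,1}\cup\cdots\cup b_{i,q_i}$ is either a single variable or a join of two or more distinct variables. Two conditions are imposed: (1) as hypotheses, all variables occurring in the same term $t_i$ or $u_i$ are mutually orthogonal; (2) each variable occurs the same total number of times among the terms $t_1,\dots,t_n$ as among $u_1,\dots,u_n$. The MGE holds in $L$ if the equality is true for every assignment of elements of $L$ to the variables that satisfies all the orthogonality hypotheses in (1). *)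

theory Defs
  imports Complex_Main "HOL-Library.Complemented_Lattices"
begin

definition orth :: "'a::orthocomplemented_lattice \<Rightarrow> 'a \<Rightarrow> bool" where
  "orth a b \<longleftrightarrow> a \<le> - b"

definition is_state :: "('a::orthocomplemented_lattice \<Rightarrow> real) \<Rightarrow> bool" where
  "is_state m \<longleftrightarrow> (\<forall>a. 0 \<le> m a \<and> m a \<le> 1) \<and> m top = 1 \<and>
     (\<forall>a b. orth a b \<longrightarrow> m (sup a b) = m a + m b)"

definition admits_strong_set_of_states :: "'a::orthocomplemented_lattice itself \<Rightarrow> bool" where
  "admits_strong_set_of_states _ \<longleftrightarrow>
     (\<exists>S::('a \<Rightarrow> real) set. S \<noteq> {} \<and> (\<forall>m\<in>S. is_state m) \<and>
        (\<forall>a b::'a. \<not> a \<le> b \<longrightarrow> (\<exists>m\<in>S. m a = 1 \<and> m b \<noteq> 1)))"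

text \<open>A term of an MGE is a nonempty list of distinct variables
  (a single variable, or a join of two or more distinct variables).\<close>

definition valid_term :: "'v list \<Rightarrow> bool" where
  "valid_term xs \<longleftrightarrow> xs \<noteq> [] \<and> distinct xs"

definition term_val :: "('v \<Rightarrow> 'a::orthocomplemented_lattice) \<Rightarrow> 'v list \<Rightarrow> 'a" where
  "term_val a xs = foldr sup (map a xs) bot"

definition meet_terms :: "('v \<Rightarrow> 'a::orthocomplemented_lattice) \<Rightarrow> nat \<Rightarrow> (nat \<Rightarrow> 'v list) \<Rightarrow> 'a" where
  "meet_terms a n t = foldr inf (map (\<lambda>i. term_val a (t i)) [0..<n]) top"

definition occ :: "nat \<Rightarrow> (nat \<Rightarrow> 'v list) \<Rightarrow> 'v \<Rightarrow> nat" where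
  "occ n t x = (\<Sum>i<n. count_list (t i) x)"

definition is_MGE :: "nat \<Rightarrow> (nat \<Rightarrow> 'v list) \<Rightarrow> (nat \<Rightarrow> 'v list) \<Rightarrow> bool" where
  "is_MGE n t u \<longleftrightarrow> 2 \<le> n \<and> (\<forall>i<n. valid_term (t i) \<and> valid_term (u i)) \<and>
     (\<forall>x. occ n t x = occ n u x)"

definition hyps_hold :: "('v \<Rightarrow> 'a::orthocomplemented_lattice) \<Rightarrow> nat \<Rightarrow> (nat \<Rightarrow> 'v list) \<Rightarrow> (nat \<Rightarrow> 'v list) \<Rightarrow> bool" where
  "hyps_hold a n t u \<longleftrightarrow> (\<forall>i<n. \<forall>x\<in>set (t i). \<forall>y\<in>set (t i). x \<noteq> y \<longrightarrow> orth (a x) (a y)) \<and>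
     (\<forall>i<n. \<forall>x\<in>set (u i). \<forall>y\<in>set (u i). x \<noteq> y \<longrightarrow> orth (a x) (a y))"

definition MGE_holds :: "'a::orthocomplemented_lattice itself \<Rightarrow> nat \<Rightarrow> (nat \<Rightarrow> 'v list) \<Rightarrow> (nat \<Rightarrow> 'v list) \<Rightarrow> bool" where
  "MGE_holds _ n t u \<longleftrightarrow> (\<forall>a::'v \<Rightarrow> 'a. hyps_hold a n t u \<longrightarrow> meet_terms a n t = meet_terms a n u)"

end

theory Submission
  imports Defs
begin

lemma orth_sym: "orth (a::'a::orthocomplemented_lattice) b \<Longrightarrow> orth b a"
  unfolding orth_def by (metis compl_le_swap1)

lemma state_bot: assumes "is_state m" shows "m (bot::'a::orthocomplemented_lattice) = 0"
proof -
  have "orth (bot::'a) bot" unfolding orth_def by simp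
  hence "m (sup bot bot) = m bot + m bot" using assms unfolding is_state_def by blast
  thus ?thesis by simp
qed

lemma state_compl: assumes "is_state m" shows "m (- (b::'a::orthocomplemented_lattice)) = 1 - m b"
proof -
  have "orth b (- b)" unfolding orth_def by simp
  hence "m (sup b (- b)) = m b + m (- b)" using assms unfolding is_state_def by blast
  moreover have "sup b (- b) = top" by simp
  ultimately show ?thesis using assms unfolding is_state_def by simp
qed

lemma state_mono: assumes "is_state m" "(a::'a::orthocomplemented_lattice) \<le> b" shows "m a \<le> m b"
proof -
  have "orth a (- b)" unfolding orth_def using assms(2) by simp
  hence "m (sup a (- b)) = m a + m (- b)" using assms unfolding is_state_def by blast
  moreover have "m (sup a (- b)) \<le> 1" using assms unfolding is_state_def by blast
  ultimately show ?thesis using state_compl[OF assms(1)] by simp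
qed

lemma term_val_le: "(\<forall>y\<in>set xs. a y \<le> c) \<Longrightarrow> term_val a xs \<le> (c::'a::orthocomplemented_lattice)"
  by (induction xs) (auto simp: term_val_def)

lemma state_term_val:
  assumes "is_state m" "distinct xs"
    "\<forall>x\<in>set xs. \<forall>y\<in>set xs. x \<noteq> y \<longrightarrow> orth (a x) (a y :: 'a::orthocomplemented_lattice)"
  shows "m (term_val a xs) = sum_list (map (m \<circ> a) xs)"
  using assms(2,3)
proof (induction xs)
  case Nil then show ?case using state_bot[OF assms(1)] by (simp add: term_val_def)
next
  case (Cons x xs)
  have "term_val a xs \<le> - a x"
    using Cons.prems by (intro term_val_le) (auto simp: orth_def dest: orth_sym)
  hence "orth (a x) (term_val a xs)" unfolding orth_def by (metis compl_le_swap1)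
  hence "m (sup (a x) (term_val a xs)) = m (a x) + m (term_val a xs)"
    using assms(1) unfolding is_state_def by blast
  moreover have "term_val a (x#xs) = sup (a x) (term_val a xs)" by (simp add: term_val_def)
  ultimately show ?case using Cons by simp
qed

lemma meet_le: "i < n \<Longrightarrow> meet_terms a n t \<le> term_val a (t i)"
proof -
  have "\<And>j. j \<in> set js \<Longrightarrow> foldr inf (map (\<lambda>i. term_val a (t i)) js) top \<le> term_val a (t j)" for js
    by (induction js) (auto intro: le_infI2)
  thus "i < n \<Longrightarrow> ?thesis" unfolding meet_terms_def by simp
qed

lemma meet_ge: "(\<forall>i<n. c \<le> term_val a (t i)) \<Longrightarrow> c \<le> meet_terms a n t"
proof -
  have "(\<forall>j\<in>set js. c \<le> term_val a (t j)) \<Longrightarrow> c \<le> foldr inf (map (\<lambda>i. term_val a (t i)) js) top" for js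
    by (induction js) auto
  thus "(\<forall>i<n. c \<le> term_val a (t i)) \<Longrightarrow> ?thesis" unfolding meet_terms_def by simp
qed

lemma sum_list_count_real:
  assumes "finite V" "set xs \<subseteq> V"
  shows "sum_list (map (f::'b \<Rightarrow> real) xs) = (\<Sum>x\<in>V. real (count_list xs x) * f x)"
  using assms(2)
proof (induction xs)
  case Nil then show ?case by simp
next
  case (Cons y xs)
  have "(\<Sum>x\<in>V. real (count_list (y#xs) x) * f x)
        = (\<Sum>x\<in>V. real (count_list xs x) * f x + (if y = x then f x else 0))"
    by (rule sum.cong) (auto simp: algebra_simps)
  also have "\<dots> = (\<Sum>x\<in>V. real (count_list xs x) * f x) + f y"
    using Cons.prems assms(1) by (simp add: sum.distrib)
  finally show ?case using Cons by simp
qed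

lemma sum_terms:
  assumes "is_state m" "\<forall>i<n. valid_term (t i)"
    "\<forall>i<n. \<forall>x\<in>set (t i). \<forall>y\<in>set (t i). x \<noteq> y \<longrightarrow> orth (a x) (a y :: 'a::orthocomplemented_lattice)"
    "finite V" "\<forall>i<n. set (t i) \<subseteq> V"
  shows "(\<Sum>i<n. m (term_val a (t i))) = (\<Sum>x\<in>V. real (occ n t x) * m (a x))"
proof -
  have "(\<Sum>i<n. m (term_val a (t i))) = (\<Sum>i<n. \<Sum>x\<in>V. real (count_list (t i) x) * m (a x))"
  proof (rule sum.cong)
    fix i assume "i \<in> {..<n}"
    hence i: "i < n" by simp
    have "m (term_val a (t i)) = sum_list (map (m \<circ> a) (t i))"
      using state_term_val[OF assms(1)] assms(2,3) i unfolding valid_term_def by blast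
    also have "\<dots> = (\<Sum>x\<in>V. of_nat (count_list (t i) x) * (m \<circ> a) x)"
      using sum_list_count_real[OF assms(4), of "t i" "m \<circ> a"] assms(5) i by simp
    finally show "m (term_val a (t i)) = (\<Sum>x\<in>V. real (count_list (t i) x) * m (a x))" by simp
  qed simp
  also have "\<dots> = (\<Sum>x\<in>V. \<Sum>i<n. real (count_list (t i) x) * m (a x))"
    by (rule sum.swap)
  also have "\<dots> = (\<Sum>x\<in>V. real (occ n t x) * m (a x))"
    by (simp add: occ_def sum_distrib_right)
  finally show ?thesis .
qed

lemma one_side:
  assumes S: "admits_strong_set_of_states TYPE('a::orthocomplemented_lattice)"
    and M: "is_MGE n t u" and H: "hyps_hold (a::'v \<Rightarrow> 'a) n t u"
  shows "meet_terms a n t \<le> meet_terms a n u"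
proof (rule meet_ge, intro allI impI, rule ccontr)
  fix i assume i: "i < n" and nle: "\<not> meet_terms a n t \<le> term_val a (u i)"
  obtain SS :: "('a \<Rightarrow> real) set" where SS1: "\<forall>m\<in>SS. is_state m"
    and SS2: "\<forall>p q::'a. \<not> p \<le> q \<longrightarrow> (\<exists>m\<in>SS. m p = 1 \<and> m q \<noteq> 1)"
    using S unfolding admits_strong_set_of_states_def by blast
  from SS2 nle obtain m where mS: "m \<in> SS" and m2: "m (meet_terms a n t) = 1"
    and m3: "m (term_val a (u i)) \<noteq> 1" by blast
  have m1: "is_state m" using SS1 mS by blast
  have le1: "m p \<le> 1" for p using m1 unfolding is_state_def by blast
  have t1: "m (term_val a (t j)) = 1" if "j < n" for j
  proof -
    have "m (meet_terms a n t) \<le> m (term_val a (t j))"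
      by (rule state_mono[OF m1 meet_le[OF that]])
    thus ?thesis using m2 le1[of "term_val a (t j)"] by linarith
  qed
  define V where "V = (\<Union>j<n. set (t j) \<union> set (u j))"
  have fV: "finite V" unfolding V_def by simp
  have Vt: "\<forall>j<n. set (t j) \<subseteq> V" and Vu: "\<forall>j<n. set (u j) \<subseteq> V" unfolding V_def by blast+
  have vt: "\<forall>j<n. valid_term (t j)" and vu: "\<forall>j<n. valid_term (u j)"
    using M unfolding is_MGE_def by blast+
  have ht: "\<forall>i<n. \<forall>x\<in>set (t i). \<forall>y\<in>set (t i). x \<noteq> y \<longrightarrow> orth (a x) (a y)"
   and hu: "\<forall>i<n. \<forall>x\<in>set (u i). \<forall>y\<in>set (u i). x \<noteq> y \<longrightarrow> orth (a x) (a y)"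
    using H unfolding hyps_hold_def by blast+
  have sumt: "(\<Sum>j<n. m (term_val a (t j))) = (\<Sum>x\<in>V. real (occ n t x) * m (a x))"
    by (rule sum_terms[OF m1 vt ht fV Vt])
  have sumu: "(\<Sum>j<n. m (term_val a (u j))) = (\<Sum>x\<in>V. real (occ n u x) * m (a x))"
    by (rule sum_terms[OF m1 vu hu fV Vu])
  have oc: "\<forall>x. occ n t x = occ n u x" using M unfolding is_MGE_def by blast
  have "(\<Sum>j<n. m (term_val a (t j))) = real n" using t1 by simp
  hence "(\<Sum>j<n. m (term_val a (u j))) = real n" using sumt sumu oc by simp
  hence "(\<Sum>j<n. 1 - m (term_val a (u j))) = 0" by (simp add: sum_subtractf)
  moreover have "\<forall>j\<in>{..<n}. 0 \<le> 1 - m (term_val a (u j))"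
    using le1 by (simp add: algebra_simps)
  ultimately have "\<forall>j\<in>{..<n}. 1 - m (term_val a (u j)) = 0"
    by (subst sum_nonneg_eq_0_iff[symmetric]) auto
  hence "1 - m (term_val a (u i)) = 0" using i by blast
  thus False using m3 by simp
qed

theorem theorem6p4:
  fixes t u :: "nat \<Rightarrow> 'v list" and n :: nat
  assumes "admits_strong_set_of_states TYPE('a::orthocomplemented_lattice)"
    and "is_MGE n t u"
  shows "MGE_holds TYPE('a) n t u"
  unfolding MGE_holds_def
proof (intro allI impI)
  fix a :: "'v \<Rightarrow> 'a" assume h: "hyps_hold a n t u"
  have M2: "is_MGE n u t" using assms(2) unfolding is_MGE_def by (metis (no_types, lifting))
  have h2: "hyps_hold a n u t" using h unfolding hyps_hold_def by blast
  show "meet_terms a n t = meet_terms a n u"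
    using one_side[OF assms(1) assms(2) h] one_side[OF assms(1) M2 h2] by (rule order_antisym)
qed

end
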